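(* Under the standing assumptions below, let $k\in\{0,\dots,n-1\}$ and $I(x_{k+1})=\{c_1,\dots,c_m\}$ with $c_1\prec\dots\prec c_m$. For every $j\le m$ and every $a:\mathrm{var}(c_j)\setminus X_k\to D$ such that all denominators below are nonzero, $$\prod_{i=1}^{j}\frac{w(I_k(c_i),a)}{w(I_k(c_i)\setminus\{c_i\},a)}=\frac{w(I_{k+1}(c_j),a)}{w(I_{k+1}(c_j)\setminus\{c_1,\dots,c_j\},a)}.$$
   Context: Standing assumptions: $I$ is a finite set of weighted constraints with default values on a finite domain $D$ (a constraint $c$ on variables $\mathrm{var}(c)$ is a pair $(f,\delta)$, $f:S\to\mathbb Q_{\ge0}$, $S\subseteq D^{\mathrm{var}(c)}$, $\delta\in\mathbb Q_{\ge0}$, inducing $c(a)=f(a)$ on $S$ and $\delta$ elsewhere) such that distinct constraints have distinct variable sets, $\mathcal H(I)=(\mathrm{var}(I),\{\mathrm{var}(c)\mid c\in I\})$ is $\beta$-acyclic, and $(x_1,\dots,x_n)$ is a $\beta$-elimination order of $\mathcal H(I)$ (an enumeration of $\mathrm{var}(I)$ such that for each $k$, $x_{k+1}$ is a nest point—the edges containing it are totally ordered by inclusion—of the hypergraph with vertices $\mathrm{var}(I)\setminus X_k$ and edges $\{e\setminus X_k\}\setminus\{\emptyset\}$). $X_k=\{x_1,\dots,x_k\}$. For $c,d\in I$: $c\prec d$ iff there is $k$ with $\mathrm{var}(c)\setminus X_k\subsetneq\mathrm{var}(d)\setminus X_k$; $c\preceq d$ iff $c\prec d$ or $c=d$. $\prec_0=\emptyset$;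 $c\prec_{k+1}d$ iff $c\prec_k d$ or there is $e\in I$ with $c\preceq_k e\prec d$ and $x_{k+1}\in\mathrm{var}(d)\cap\mathrm{var}(e)$; $c\preceq_k d$ iff $c=d$ or $c\prec_k d$. $I_k(c)=\{d\in I\mid d\preceq_k c\}$; $I(x)=\{c\in I\mid x\in\mathrm{var}(c)\}$. For $J\subseteq I$ and $a\in D^W$: $w(J,a)=\sum_{b\in D^{\mathrm{var}(J)},\,b\text{ agrees with }a\text{ on }W\cap\mathrm{var}(J)}\prod_{c\in J}c(b|_{\mathrm{var}(c)})$, with $w(\emptyset,a)=1$. *)

theory Defs
  imports Complex_Main "HOL-Library.FuncSet"
begin

text \<open>Weighted constraints with default values. Assignments are extensional
  functions: an element of D^W is an extensional function on W with values in D.\<close>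

record ('v, 'd) wconstr =
  cvars :: "'v set"                 
  csupp :: "('v \<Rightarrow> 'd) set"
  cfun  :: "('v \<Rightarrow> 'd) \<Rightarrow> rat"
  cdflt :: rat

definition wf_constr :: "'d set \<Rightarrow> ('v, 'd) wconstr \<Rightarrow> bool" where
  "wf_constr D c \<longleftrightarrow> finite (cvars c) \<and> csupp c \<subseteq> (cvars c \<rightarrow>\<^sub>E D)
     \<and> (\<forall>a\<in>csupp c. cfun c a \<ge> 0) \<and> cdflt c \<ge> 0"

definition ceval :: "('v, 'd) wconstr \<Rightarrow> ('v \<Rightarrow> 'd) \<Rightarrow> rat" where
  "ceval c b = (let a = restrict b (cvars c) in if a \<in> csupp c then cfun c a else cdflt c)"

definition varsI :: "('v, 'd) wconstr set \<Rightarrow> 'v set" where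
  "varsI J = \<Union> (cvars ` J)"

definition nest_point :: "'v set \<Rightarrow> 'v set set \<Rightarrow> 'v \<Rightarrow> bool" where
  "nest_point V E x \<longleftrightarrow> x \<in> V \<and>
     (\<forall>e1\<in>E. \<forall>e2\<in>E. x \<in> e1 \<and> x \<in> e2 \<longrightarrow> e1 \<subseteq> e2 \<or> e2 \<subseteq> e1)"

text \<open>beta-elimination order of a hypergraph (V,E), as a list (x_1,...,x_n):
 x(k+1) = xs!k, X(k) = set (take k xs).\<close>
definition beta_elim_order :: "'v set \<Rightarrow> 'v set set \<Rightarrow> 'v list \<Rightarrow> bool" where
  "beta_elim_order V E xs \<longleftrightarrow> distinct xs \<and> set xs = V \<and>
     (\<forall>k < length xs. nest_point (V - set (take k xs))
         ((\<lambda>e. e - set (take k xs)) ` E - {{}}) (xs ! k))"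

text \<open>beta-acyclicity: the hypergraph admits a beta-elimination order
  (the standard characterisation by successive removal of nest points).\<close>
definition beta_acyclic :: "'v set \<Rightarrow> 'v set set \<Rightarrow> bool" where
  "beta_acyclic V E \<longleftrightarrow> (\<exists>xs. beta_elim_order V E xs)"

definition hyp_edges :: "('v, 'd) wconstr set \<Rightarrow> 'v set set" where
  "hyp_edges I = cvars ` I"

definition cprec :: "'v list \<Rightarrow> ('v, 'd) wconstr \<Rightarrow> ('v, 'd) wconstr \<Rightarrow> bool" where
  "cprec xs c d \<longleftrightarrow> (\<exists>k \<le> length xs. cvars c - set (take k xs) \<subset> cvars d - set (take k xs))"

fun cprecK :: "('v, 'd) wconstr set \<Rightarrow> 'v list \<Rightarrow> nat \<Rightarrow> ('v, 'd) wconstr \<Rightarrow> ('v, 'd) wconstr \<Rightarrow> bool" where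
  "cprecK I xs 0 c d = False"
| "cprecK I xs (Suc k) c d \<longleftrightarrow> cprecK I xs k c d \<or>
     (\<exists>e\<in>I. (c = e \<or> cprecK I xs k c e) \<and> cprec xs e d \<and>
             xs ! k \<in> cvars d \<and> xs ! k \<in> cvars e)"

definition IK :: "('v, 'd) wconstr set \<Rightarrow> 'v list \<Rightarrow> nat \<Rightarrow> ('v, 'd) wconstr \<Rightarrow> ('v, 'd) wconstr set" where
  "IK I xs k c = {d \<in> I. d = c \<or> cprecK I xs k d c}"

definition Ix :: "('v, 'd) wconstr set \<Rightarrow> 'v \<Rightarrow> ('v, 'd) wconstr set" where
  "Ix I x = {c \<in> I. x \<in> cvars c}"

definition wJ :: "'d set \<Rightarrow> ('v, 'd) wconstr set \<Rightarrow> 'v set \<Rightarrow> ('v \<Rightarrow> 'd) \<Rightarrow> rat" where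
  "wJ D J W a = (\<Sum>b \<in> {b \<in> varsI J \<rightarrow>\<^sub>E D. \<forall>v \<in> W \<inter> varsI J. b v = a v}.
                    \<Prod>c\<in>J. ceval c b)"

end

theory Submission imports Defs begin

lemma ceval_restrict: "cvars c \<subseteq> V \<Longrightarrow> ceval c (restrict b V) = ceval c b"
  unfolding ceval_def by (simp add: inf.absorb2)

lemma varsI_Un: "varsI (J1 \<union> J2) = varsI J1 \<union> varsI J2"
  unfolding varsI_def by auto

lemma wJ_empty: "wJ D {} W a = 1"
  unfolding wJ_def varsI_def by simp

lemma wJ_mult:
  fixes D :: "'d set" and J1 J2 :: "('v,'d) wconstr set" and a :: "'v \<Rightarrow> 'd"
  assumes fin: "finite J1" "finite J2" and disj: "J1 \<inter> J2 = {}"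
    and sep: "varsI J1 \<inter> varsI J2 \<subseteq> W"
  shows "wJ D (J1 \<union> J2) W a = wJ D J1 W a * wJ D J2 W a"
proof -
  define V1 where "V1 = varsI J1"
  define V2 where "V2 = varsI J2"
  define A1 where "A1 = {b \<in> V1 \<rightarrow>\<^sub>E D. \<forall>v \<in> W \<inter> V1. b v = a v}"
  define A2 where "A2 = {b \<in> V2 \<rightarrow>\<^sub>E D. \<forall>v \<in> W \<inter> V2. b v = a v}"
  define A where "A = {b \<in> (V1 \<union> V2) \<rightarrow>\<^sub>E D. \<forall>v \<in> W \<inter> (V1 \<union> V2). b v = a v}"
  define F1 where "F1 = (\<lambda>b. \<Prod>c\<in>J1. ceval c b)"
  define F2 where "F2 = (\<lambda>b. \<Prod>c\<in>J2. ceval c b)"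
  define h where "h = (\<lambda>b::'v\<Rightarrow>'d. (restrict b V1, restrict b V2))"
  have sub1: "\<And>c. c \<in> J1 \<Longrightarrow> cvars c \<subseteq> V1" unfolding V1_def varsI_def by auto
  have sub2: "\<And>c. c \<in> J2 \<Longrightarrow> cvars c \<subseteq> V2" unfolding V2_def varsI_def by auto
  have bij: "bij_betw h A (A1 \<times> A2)"
  proof (unfold bij_betw_def, intro conjI)
    show "inj_on h A"
    proof (rule inj_onI)
      fix b b' assume b: "b \<in> A" "b' \<in> A" "h b = h b'"
      show "b = b'"
      proof
        fix v
        show "b v = b' v"
        proof (cases "v \<in> V1 \<union> V2")
          case True
          then show ?thesis using b(3) unfolding h_def
            by (metis Pair_inject UnE restrict_apply')
        next
          case False
          then show ?thesis using b(1,2) unfolding A_def by (auto simp: PiE_def extensional_def)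
        qed
      qed
    qed
    show "h ` A = A1 \<times> A2"
    proof
      show "h ` A \<subseteq> A1 \<times> A2"
        unfolding h_def A_def A1_def A2_def by (auto simp: PiE_def Pi_def)
      show "A1 \<times> A2 \<subseteq> h ` A"
      proof
        fix p assume p: "p \<in> A1 \<times> A2"
        then obtain b1 b2 where pb: "p = (b1, b2)" "b1 \<in> A1" "b2 \<in> A2" by auto
        define b where "b = restrict (\<lambda>v. if v \<in> V1 then b1 v else b2 v) (V1 \<union> V2)"
        have "b \<in> A" using pb(2,3) unfolding A_def A1_def A2_def b_def by (auto simp: PiE_def Pi_def)
        moreover have "restrict b V1 = b1"
          using pb(2) unfolding A1_def b_def by (auto simp: PiE_def extensional_def fun_eq_iff)
        moreover have "restrict b V2 = b2"
        proof
          fix v show "restrict b V2 v = b2 v"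
          proof (cases "v \<in> V2")
            case True
            show ?thesis
            proof (cases "v \<in> V1")
              case True
              with \<open>v \<in> V2\<close> have "v \<in> W" using sep unfolding V1_def V2_def by auto
              then show ?thesis using pb(2,3) \<open>v \<in> V2\<close> True unfolding A1_def A2_def b_def by auto
            next
              case False
              then show ?thesis using \<open>v \<in> V2\<close> unfolding b_def by auto
            qed
          next
            case False
            then show ?thesis using pb(3) unfolding A2_def by (auto simp: PiE_def extensional_def)
          qed
        qed
        ultimately show "p \<in> h ` A" unfolding h_def pb(1) by auto
      qed
    qed
  qed
  have "wJ D J1 W a * wJ D J2 W a = (\<Sum>b1\<in>A1. F1 b1) * (\<Sum>b2\<in>A2. F2 b2)"
    unfolding wJ_def A1_def A2_def F1_def F2_def V1_def V2_def by simp
  also have "\<dots> = (\<Sum>p\<in>A1 \<times> A2. F1 (fst p) * F2 (snd p))"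
    by (simp add: sum_product sum.cartesian_product case_prod_beta)
  also have "\<dots> = (\<Sum>b\<in>A. F1 (fst (h b)) * F2 (snd (h b)))"
    by (rule sum.reindex_bij_betw[OF bij, symmetric])
  also have "\<dots> = (\<Sum>b\<in>A. \<Prod>c\<in>J1 \<union> J2. ceval c b)"
  proof (rule sum.cong[OF refl])
    fix b
    have "F1 (fst (h b)) = (\<Prod>c\<in>J1. ceval c b)"
      unfolding F1_def h_def by (auto intro!: prod.cong ceval_restrict sub1)
    moreover have "F2 (snd (h b)) = (\<Prod>c\<in>J2. ceval c b)"
      unfolding F2_def h_def by (auto intro!: prod.cong ceval_restrict sub2)
    ultimately show "F1 (fst (h b)) * F2 (snd (h b)) = (\<Prod>c\<in>J1 \<union> J2. ceval c b)"
      by (simp add: prod.union_disjoint[OF fin disj])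
  qed
  also have "\<dots> = wJ D (J1 \<union> J2) W a"
    unfolding wJ_def A_def V1_def V2_def varsI_Un by simp
  finally show ?thesis by simp
qed


locale bconf =
  fixes I :: "('v,'d) wconstr set" and xs :: "'v list"
  assumes inj: "inj_on cvars I"
    and ord: "beta_elim_order (varsI I) (hyp_edges I) xs"
begin

abbreviation VV :: "nat \<Rightarrow> ('v,'d) wconstr \<Rightarrow> 'v set" where
  "VV k c \<equiv> cvars c - set (take k xs)"

lemma dist: "distinct xs" using ord unfolding beta_elim_order_def by auto

lemma notin_take: "p < length xs \<Longrightarrow> xs ! p \<notin> set (take p xs)"
  using dist by (metis distinct_take id_take_nth_drop not_distinct_conv_prefix)

lemma take_Suc_set: "p < length xs \<Longrightarrow> set (take (Suc p) xs) = insert (xs ! p) (set (take p xs))"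
  by (simp add: take_Suc_conv_app_nth)

lemma take_mono: "m \<le> m' \<Longrightarrow> set (take m xs) \<subseteq> set (take m' xs)"
  by (simp add: set_take_subset_set_take)

lemma nest:
  assumes "p < length xs" "a \<in> I" "b \<in> I" "xs ! p \<in> cvars a" "xs ! p \<in> cvars b"
  shows "VV p a \<subseteq> VV p b \<or> VV p b \<subseteq> VV p a"
proof -
  have np: "nest_point (varsI I - set (take p xs))
         ((\<lambda>e. e - set (take p xs)) ` hyp_edges I - {{}}) (xs ! p)"
    using ord assms(1) unfolding beta_elim_order_def by auto
  have "xs ! p \<notin> set (take p xs)" using notin_take assms(1) .
  hence "VV p a \<in> (\<lambda>e. e - set (take p xs)) ` hyp_edges I - {{}}"
        "VV p b \<in> (\<lambda>e. e - set (take p xs)) ` hyp_edges I - {{}}"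
        "xs ! p \<in> VV p a" "xs ! p \<in> VV p b"
    using assms unfolding hyp_edges_def by auto
  thus ?thesis using np unfolding nest_point_def by blast
qed

lemma cprec_trans:
  fixes c d e :: "('v,'d) wconstr"
  assumes "cprec xs c d" "cprec xs d e" shows "cprec xs c e"
proof -
  obtain m where m: "m \<le> length xs" "cvars c - set (take m xs) \<subset> cvars d - set (take m xs)"
    using assms(1) unfolding cprec_def by auto
  obtain m' where m': "m' \<le> length xs" "cvars d - set (take m' xs) \<subset> cvars e - set (take m' xs)"
    using assms(2) unfolding cprec_def by auto
  show ?thesis
  proof (cases "m \<le> m'")
    case True
    hence "set (take m xs) \<subseteq> set (take m' xs)" by (rule take_mono)
    hence "VV m' c \<subseteq> VV m' d" using m(2) by blast
    hence "VV m' c \<subset> VV m' e" using m'(2) by blast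
    thus ?thesis using m'(1) unfolding cprec_def by blast
  next
    case False
    hence "set (take m' xs) \<subseteq> set (take m xs)" by (intro take_mono) simp
    hence "VV m d \<subseteq> VV m e" using m'(2) by blast
    hence "VV m c \<subset> VV m e" using m(2) by blast
    thus ?thesis using m(1) unfolding cprec_def by blast
  qed
qed

lemma cprec_irrefl: "\<not> cprec xs (c::('v,'d) wconstr) c"
  unfolding cprec_def by auto

lemma cprec_asym: "cprec xs (c::('v,'d) wconstr) d \<Longrightarrow> \<not> cprec xs d c"
  using cprec_trans cprec_irrefl by blast

lemma nest_le:
  assumes "k < length xs" "e \<in> I" "c \<in> I" "xs ! k \<in> cvars e" "xs ! k \<in> cvars c" "cprec xs e c"
  shows "VV k e \<subseteq> VV k c"
proof (rule ccontr)
  assume nle: "\<not> VV k e \<subseteq> VV k c"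
  hence strict: "VV k c \<subset> VV k e" using nest[OF assms(1-5)] by blast
  obtain m where m: "m \<le> length xs" "VV m e \<subset> VV m c"
    using assms(6) unfolding cprec_def by auto
  show False
  proof (cases "m \<le> k")
    case True
    hence "set (take m xs) \<subseteq> set (take k xs)" by (rule take_mono)
    hence "VV k e \<subseteq> VV k c" using m(2) by blast
    thus False using nle by blast
  next
    case False
    hence "set (take k xs) \<subseteq> set (take m xs)" by (intro take_mono) simp
    hence "VV m c \<subseteq> VV m e" using strict by blast
    thus False using m(2) by blast
  qed
qed

lemma cprecK_mono: "k \<le> k' \<Longrightarrow> cprecK I xs k c d \<Longrightarrow> cprecK I xs k' c d"
  by (induction k' rule: dec_induct) auto

lemma cprecK_cprec: "cprecK I xs k c d \<Longrightarrow> cprec xs c d"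
  by (induction k arbitrary: c d) (auto intro: cprec_trans)

lemma P1: "k \<le> length xs \<Longrightarrow> c \<in> I \<Longrightarrow> cprecK I xs k d c \<Longrightarrow> VV k d \<subseteq> VV k c"
proof (induction k arbitrary: d c)
  case 0 then show ?case by simp
next
  case (Suc k)
  have kl: "k < length xs" using Suc.prems by simp
  have sub: "set (take k xs) \<subseteq> set (take (Suc k) xs)" by (intro take_mono) simp
  from Suc.prems(3) consider "cprecK I xs k d c"
    | e where "e \<in> I" "d = e \<or> cprecK I xs k d e" "cprec xs e c" "xs ! k \<in> cvars c" "xs ! k \<in> cvars e"
    by auto
  then show ?case
  proof cases
    case 1
    then have "VV k d \<subseteq> VV k c" using Suc by simp
    then show ?thesis using sub by blast
  next
    case 2
    have "VV k e \<subseteq> VV k c" using nest_le[OF kl 2(1) Suc.prems(2) 2(5,4,3)] .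
    moreover have "VV k d \<subseteq> VV k e" using 2(2) Suc.IH[of e d] kl 2(1) by auto
    ultimately show ?thesis using sub by blast
  qed
qed

lemma x_in:
  assumes "k < length xs" "c \<in> I" "cprecK I xs k d c" "xs ! k \<in> cvars d"
  shows "xs ! k \<in> cvars c"
  using P1[of k c d] assms notin_take[of k] by auto

lemma cprecK_trans:
  "k \<le> length xs \<Longrightarrow> c \<in> I \<Longrightarrow> cprecK I xs k d e \<Longrightarrow> cprecK I xs k e c \<Longrightarrow> cprecK I xs k d c"
proof (induction k arbitrary: d e c)
  case 0 then show ?case by simp
next
  case (Suc k)
  have kl: "k < length xs" using Suc.prems by simp
  from Suc.prems(4) consider "cprecK I xs k e c"
    | h where "h \<in> I" "e = h \<or> cprecK I xs k e h" "cprec xs h c" "xs ! k \<in> cvars c" "xs ! k \<in> cvars h"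
    by auto
  then show ?case
  proof cases
    case 1
    from Suc.prems(3) consider "cprecK I xs k d e"
      | g where "g \<in> I" "d = g \<or> cprecK I xs k d g" "cprec xs g e" "xs ! k \<in> cvars e" "xs ! k \<in> cvars g"
      by auto
    then show ?thesis
    proof cases
      case 1
      then show ?thesis using Suc.IH[of c d e] Suc.prems 1 \<open>cprecK I xs k e c\<close> by simp
    next
      case 2
      have "xs ! k \<in> cvars c" using x_in[OF kl Suc.prems(2) \<open>cprecK I xs k e c\<close> 2(4)] .
      moreover have "cprec xs g c" using 2(3) cprecK_cprec[OF \<open>cprecK I xs k e c\<close>] cprec_trans by blast
      ultimately show ?thesis using 2 by auto
    qed
  next
    case 2
    from Suc.prems(3) consider "cprecK I xs k d e"
      | g where "g \<in> I" "d = g \<or> cprecK I xs k d g" "cprec xs g e" "xs ! k \<in> cvars e" "xs ! k \<in> cvars g"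
      by auto
    then show ?thesis
    proof cases
      case 1
      have "cprecK I xs k d h"
        using 2(2) 1 Suc.IH[of h d e] kl 2(1) by auto
      then show ?thesis using 2 by auto
    next
      case 3: 2
      have "cprec xs e h \<or> e = h" using 2(2) cprecK_cprec by blast
      hence "cprec xs g h" using 3(3) cprec_trans by blast
      hence "cprec xs g c" using 2(3) cprec_trans by blast
      then show ?thesis using 3 2 by auto
    qed
  qed
qed

lemma comp_eq:
  "k \<le> length xs \<Longrightarrow> a \<in> I \<Longrightarrow> b \<in> I \<Longrightarrow> a \<noteq> b \<Longrightarrow> VV k a = VV k b \<Longrightarrow> cprec xs a b \<or> cprec xs b a"
proof (induction k)
  case 0
  then show ?case using inj by (simp add: inj_on_def)
next
  case (Suc k)
  show ?case
  proof (cases "VV k a = VV k b")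
    case True
    then show ?thesis using Suc by simp
  next
    case False
    have kl: "k < length xs" using Suc.prems by simp
    have "VV k a = VV (Suc k) a \<union> ({xs ! k} \<inter> cvars a)"
         "VV k b = VV (Suc k) b \<union> ({xs ! k} \<inter> cvars b)"
      using take_Suc_set[OF kl] notin_take[OF kl] by auto
    hence "VV k a \<subset> VV k b \<or> VV k b \<subset> VV k a" using False Suc.prems(5) by auto
    then show ?thesis using kl unfolding cprec_def by (meson less_imp_le)
  qed
qed

lemma comp:
  assumes "p < length xs" "a \<in> I" "b \<in> I" "a \<noteq> b" "xs ! p \<in> cvars a" "xs ! p \<in> cvars b"
  shows "cprec xs a b \<or> cprec xs b a"
proof -
  have "VV p a \<subset> VV p b \<or> VV p b \<subset> VV p a \<or> VV p a = VV p b"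
    using nest[OF assms(1,2,3,5,6)] by blast
  then show ?thesis
    using comp_eq[of p a b] assms unfolding cprec_def by (meson less_imp_le)
qed

lemma compK:
  assumes "p < length xs" "a \<in> I" "b \<in> I" "a \<noteq> b" "xs ! p \<in> cvars a" "xs ! p \<in> cvars b"
  shows "cprecK I xs (Suc p) a b \<or> cprecK I xs (Suc p) b a"
  using comp[OF assms] assms by auto

lemma conn:
  assumes "k \<le> length xs" "d \<in> I" "d' \<in> I" "d \<noteq> d'" "y \<in> cvars d" "y \<in> cvars d'"
    "y \<in> set (take k xs)"
  shows "cprecK I xs k d d' \<or> cprecK I xs k d' d"
proof -
  obtain p where p: "p < length (take k xs)" "y = take k xs ! p"
    using assms(7) by (auto simp: in_set_conv_nth)
  hence pk: "p < k" "p < length xs" and y: "y = xs ! p" by auto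
  have "cprecK I xs (Suc p) d d' \<or> cprecK I xs (Suc p) d' d"
    using compK[OF pk(2) assms(2-4)] assms(5,6) y by auto
  then show ?thesis using cprecK_mono[of "Suc p" k] pk by auto
qed

lemma forest:
  "k \<le> length xs \<Longrightarrow> a \<in> I \<Longrightarrow> b \<in> I \<Longrightarrow> a \<noteq> b \<Longrightarrow> cprecK I xs k d a \<Longrightarrow> cprecK I xs k d b
   \<Longrightarrow> cprecK I xs k a b \<or> cprecK I xs k b a"
proof (induction k arbitrary: d a b)
  case 0 then show ?case by simp
next
  case (Suc k)
  have kl: "k < length xs" using Suc.prems by simp
  let ?x = "xs ! k"
  have key: "cprecK I xs (Suc k) a b \<or> cprecK I xs (Suc k) b a"
    if ab: "a \<in> I" "b \<in> I" "a \<noteq> b" and da: "cprecK I xs k d a"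
      and g: "g \<in> I" "d = g \<or> cprecK I xs k d g" "cprec xs g b" "?x \<in> cvars b" "?x \<in> cvars g"
    for a b g
  proof -
    have viaxa: ?thesis if "?x \<in> cvars a" using compK[OF kl ab] that g(4) by blast
    show ?thesis
    proof (cases "d = g")
      case True
      then show ?thesis using x_in[OF kl ab(1) da] g(5) viaxa by blast
    next
      case False
      hence dg: "cprecK I xs k d g" using g(2) by blast
      have "a = g \<or> cprecK I xs k a g \<or> cprecK I xs k g a"
        using Suc.IH[of a g d] kl ab(1) g(1) da dg by (cases "a = g") auto
      then show ?thesis
      proof (elim disjE)
        assume "a = g" then show ?thesis using g ab by auto
      next
        assume "cprecK I xs k a g" then show ?thesis using g ab by auto
      next
        assume "cprecK I xs k g a" then show ?thesis using x_in[OF kl ab(1)] g(5) viaxa by blast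
      qed
    qed
  qed
  from Suc.prems(5) consider "cprecK I xs k d a"
    | g where "g \<in> I" "d = g \<or> cprecK I xs k d g" "cprec xs g a" "?x \<in> cvars a" "?x \<in> cvars g"
    by auto
  then show ?case
  proof cases
    case 1
    from Suc.prems(6) consider "cprecK I xs k d b"
      | g where "g \<in> I" "d = g \<or> cprecK I xs k d g" "cprec xs g b" "?x \<in> cvars b" "?x \<in> cvars g"
      by auto
    then show ?thesis
    proof cases
      case 3: 1
      then show ?thesis using Suc.IH[of a b d] Suc.prems 1 kl by auto
    next
      case 2
      then show ?thesis using key[of a b g] Suc.prems 1 by blast
    qed
  next
    case 2
    from Suc.prems(6) consider "cprecK I xs k d b"
      | h where "h \<in> I" "d = h \<or> cprecK I xs k d h" "cprec xs h b" "?x \<in> cvars b" "?x \<in> cvars h"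
      by auto
    then show ?thesis
    proof cases
      case 1
      then show ?thesis using key[of b a g] Suc.prems 2 by blast
    next
      case 3: 2
      then show ?thesis using compK[OF kl Suc.prems(2-4)] 2 by blast
    qed
  qed
qed

end

lemma varsI_mono: "J \<subseteq> J' \<Longrightarrow> varsI J \<subseteq> varsI J'"
  unfolding varsI_def by auto

lemma varsI_iff: "v \<in> varsI J \<longleftrightarrow> (\<exists>d\<in>J. v \<in> cvars d)"
  unfolding varsI_def by auto

theorem lemma8:
  fixes D :: "'d set" and I :: "('v, 'd) wconstr set" and xs :: "'v list"
    and k :: nat and cs :: "('v, 'd) wconstr list" and j :: nat and a :: "'v \<Rightarrow> 'd"
  assumes finD: "finite D"
    and finI: "finite I"
    and wfI: "\<forall>c\<in>I. wf_constr D c"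
    and distinct_vars: "inj_on cvars I"
    and acyc: "beta_acyclic (varsI I) (hyp_edges I)"
    and order: "beta_elim_order (varsI I) (hyp_edges I) xs"
    and k: "k < length xs"
    and cs_set: "set cs = Ix I (xs ! k)" and cs_dist: "distinct cs"
    and cs_chain: "\<forall>i. Suc i < length cs \<longrightarrow> cprec xs (cs ! i) (cs ! Suc i)"
    and j: "1 \<le> j" "j \<le> length cs"
    and a: "a \<in> (cvars (cs ! (j - 1)) - set (take k xs)) \<rightarrow>\<^sub>E D"
    and nz1: "\<forall>i < j. wJ D (IK I xs k (cs ! i) - {cs ! i})
                          (cvars (cs ! (j - 1)) - set (take k xs)) a \<noteq> 0"
    and nz2: "wJ D (IK I xs (Suc k) (cs ! (j - 1)) - set (take j cs))
                   (cvars (cs ! (j - 1)) - set (take k xs)) a \<noteq> 0"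
  shows "(\<Prod>i < j. wJ D (IK I xs k (cs ! i)) (cvars (cs ! (j - 1)) - set (take k xs)) a
                 / wJ D (IK I xs k (cs ! i) - {cs ! i}) (cvars (cs ! (j - 1)) - set (take k xs)) a)
         = wJ D (IK I xs (Suc k) (cs ! (j - 1))) (cvars (cs ! (j - 1)) - set (take k xs)) a
           / wJ D (IK I xs (Suc k) (cs ! (j - 1)) - set (take j cs))
                  (cvars (cs ! (j - 1)) - set (take k xs)) a"
proof -
  interpret bconf I xs using distinct_vars order by unfold_locales
  define x where "x = xs ! k"
  define X where "X = set (take k xs)"
  define W where "W = cvars (cs ! (j - 1)) - X"
  define G where "G = (\<lambda>l. IK I xs k (cs ! l))"
  define U where "U = (\<lambda>i. \<Union>l<i. G l)"
  define C where "C = (\<lambda>i. set (take i cs))"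
  define w where "w = (\<lambda>J. wJ D J W a)"
  have kle: "k \<le> length xs" using k by simp
  have F_cs: "cs ! l \<in> I" "x \<in> cvars (cs ! l)" if "l < length cs" for l
    using nth_mem[OF that] cs_set unfolding Ix_def x_def by auto
  have F_Ix: "\<exists>p<length cs. d = cs ! p" if "d \<in> I" "x \<in> cvars d" for d
  proof -
    have "d \<in> set cs" using that cs_set unfolding Ix_def x_def by auto
    thus ?thesis by (auto simp: in_set_conv_nth)
  qed
  have chain: "cprec xs (cs ! i) (cs ! l)" if "i < l" "l < length cs" for i l
    using that
  proof (induction l)
    case 0 then show ?case by simp
  next
    case (Suc l)
    have c1: "cprec xs (cs ! l) (cs ! Suc l)" using cs_chain Suc.prems by auto
    show ?case
    proof (cases "i = l")
      case True then show ?thesis using c1 by simp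
    next
      case False
      then show ?thesis using Suc c1 cprec_trans by auto
    qed
  qed
  have idx: "p < q" if "p < length cs" "q < length cs" "cprec xs (cs ! p) (cs ! q)" for p q
  proof (rule ccontr)
    assume "\<not> p < q"
    hence "q < p \<or> q = p" by auto
    thus False using chain[of q p] that cprec_asym cprec_irrefl by blast
  qed
  have jl: "j - 1 < length cs" using j by simp
  have G_I: "G l \<subseteq> I" for l unfolding G_def IK_def by auto
  have finG: "finite J" if "J \<subseteq> I" for J using finite_subset[OF that finI] .
  have c_in_G: "cs ! l \<in> G l" if "l < length cs" for l
    using F_cs[OF that] unfolding G_def IK_def by auto
  have G_mem: "d \<in> I \<and> (d = cs ! l \<or> cprecK I xs k d (cs ! l))" if "d \<in> G l" for d l
    using that unfolding G_def IK_def by auto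
  have VV_G: "cvars d - X \<subseteq> cvars (cs ! i) - X" if "i < length cs" "d \<in> G i" for i d
    using G_mem[OF that(2)] P1[OF kle F_cs(1)[OF that(1)], of d] unfolding X_def by auto
  have G_W: "cvars d - X \<subseteq> W" if "i < j" "d \<in> G i" for i d
  proof -
    have il: "i < length cs" using that j by simp
    have "cvars (cs ! i) - X \<subseteq> W"
    proof (cases "i = j - 1")
      case True then show ?thesis unfolding W_def by simp
    next
      case False
      hence "cprec xs (cs ! i) (cs ! (j - 1))" using chain[of i "j-1"] that jl by simp
      then show ?thesis using nest_le[OF k F_cs(1)[OF il] F_cs(1)[OF jl]] F_cs(2)[OF il] F_cs(2)[OF jl]
        unfolding W_def X_def x_def by auto
    qed
    thus ?thesis using VV_G[OF il that(2)] by blast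
  qed
  have notinG: "cs ! i \<notin> G l" if "i < length cs" "l < i" for i l
  proof
    assume "cs ! i \<in> G l"
    hence "cs ! i = cs ! l \<or> cprecK I xs k (cs ! i) (cs ! l)" using G_mem by blast
    thus False
    proof
      assume "cs ! i = cs ! l"
      thus False using cs_dist that nth_eq_iff_index_eq by fastforce
    next
      assume "cprecK I xs k (cs ! i) (cs ! l)"
      hence "cprec xs (cs ! i) (cs ! l)" by (rule cprecK_cprec)
      moreover have "l < length cs" using that by simp
      ultimately have "i < l" using idx[of i l] that by simp
      thus False using that by simp
    qed
  qed
  have ci_ck: "\<not> cprecK I xs k (cs ! i) (cs ! l)" if "i < length cs" "l < i" for i l
    using notinG[OF that] F_cs[OF that(1)] unfolding G_def IK_def by auto
  have T2: "y \<notin> X" if "i < j" "l < i" "d \<in> G l" "d \<notin> G i" "d' \<in> G i" "y \<in> cvars d" "y \<in> cvars d'"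
    for i l d d' y
  proof
    assume yX: "y \<in> X"
    have il: "i < length cs" "l < length cs" using that j by auto
    have dI: "d \<in> I" "d' \<in> I" using G_mem that by auto
    have "d \<noteq> d'" using that by auto
    hence cc: "cprecK I xs k d d' \<or> cprecK I xs k d' d"
      using conn[OF kle dI \<open>d \<noteq> d'\<close> that(6,7)] yX unfolding X_def by auto
    have dl: "d = cs ! l \<or> cprecK I xs k d (cs ! l)" using G_mem that(3) by blast
    have dl': "cprecK I xs k (cs ! i) d \<Longrightarrow> False"
      using dl cprecK_trans[OF kle F_cs(1)[OF il(2)]] ci_ck[OF il(1) that(2)] by blast
    show False
    proof (cases "cprecK I xs k d d'")
      case True
      have "d' = cs ! i \<or> cprecK I xs k d' (cs ! i)" using G_mem that(5) by blast
      hence "cprecK I xs k d (cs ! i)"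
        using True cprecK_trans[OF kle F_cs(1)[OF il(1)]] by blast
      thus False using that(4) dI unfolding G_def IK_def by auto
    next
      case False
      hence dd: "cprecK I xs k d' d" using cc by blast
      have "d' = cs ! i \<or> cprecK I xs k d' (cs ! i)" using G_mem that(5) by blast
      thus False
      proof
        assume "d' = cs ! i" thus False using dd dl' by blast
      next
        assume h: "cprecK I xs k d' (cs ! i)"
        have "d \<noteq> cs ! i" using that(4) c_in_G il by auto
        hence "cprecK I xs k d (cs ! i) \<or> cprecK I xs k (cs ! i) d"
          using forest[OF kle dI(1) F_cs(1)[OF il(1)] _ dd h] by blast
        thus False using dl' that(4) dI unfolding G_def IK_def by auto
      qed
    qed
  qed
  have T3: "y \<notin> X" if "i < j" "l < i" "d \<in> G l" "d \<in> G i" "d' \<in> G i" "d' \<noteq> cs ! i"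
    "\<forall>l<i. d' \<notin> G l" "y \<in> cvars d" "y \<in> cvars d'" for i l d d' y
  proof
    assume yX: "y \<in> X"
    have il: "i < length cs" "l < length cs" using that j by auto
    have dI: "d \<in> I" "d' \<in> I" using G_mem that by auto
    have d'l: "d' \<notin> G l" using that by auto
    hence "d \<noteq> d'" using that by auto
    hence cc: "cprecK I xs k d d' \<or> cprecK I xs k d' d"
      using conn[OF kle dI \<open>d \<noteq> d'\<close> that(8,9)] yX unfolding X_def by auto
    have dl: "d = cs ! l \<or> cprecK I xs k d (cs ! l)" using G_mem that(3) by blast
    have notd'l: "\<not> cprecK I xs k d' (cs ! l)" using d'l dI unfolding G_def IK_def by auto
    have d'i: "cprecK I xs k d' (cs ! i)" using G_mem that(5,6) by blast
    have "\<not> cprecK I xs k d' d"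
      using dl notd'l cprecK_trans[OF kle F_cs(1)[OF il(2)]] by blast
    hence dd: "cprecK I xs k d d'" using cc by blast
    have ld': "cprecK I xs k (cs ! l) d'"
    proof (cases "d = cs ! l")
      case True then show ?thesis using dd by simp
    next
      case False
      hence h: "cprecK I xs k d (cs ! l)" using dl by blast
      have "d' \<noteq> cs ! l" using d'l c_in_G il by auto
      hence "cprecK I xs k (cs ! l) d' \<or> cprecK I xs k d' (cs ! l)"
        using forest[OF kle F_cs(1)[OF il(2)] dI(2) _ h dd] by blast
      thus ?thesis using notd'l by blast
    qed
    have "x \<in> cvars d'" using x_in[OF k dI(2) ld'] F_cs(2)[OF il(2)] unfolding x_def by simp
    then obtain p where p: "p < length cs" "d' = cs ! p" using F_Ix dI by blast
    have "l < p" using idx[OF il(2) p(1)] cprecK_cprec[OF ld'] p by simp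
    moreover have "p < i" using idx[OF p(1) il(1)] cprecK_cprec[OF d'i] p by simp
    ultimately show False using that(7) c_in_G[OF p(1)] p(2) by auto
  qed
  have sepQ: "varsI (U i - G i) \<inter> varsI (G i) \<subseteq> W" if "i < j" for i
  proof
    fix v assume "v \<in> varsI (U i - G i) \<inter> varsI (G i)"
    then obtain d d' l where "l < i" "d \<in> G l" "d \<notin> G i" "d' \<in> G i" "v \<in> cvars d" "v \<in> cvars d'"
      by (auto simp: varsI_iff U_def)
    thus "v \<in> W" using T2[OF that] G_W[OF that] by blast
  qed
  have sepPR: "varsI (U i \<inter> G i) \<inter> varsI (G i - {cs ! i} - U i) \<subseteq> W" if "i < j" for i
  proof
    fix v assume "v \<in> varsI (U i \<inter> G i) \<inter> varsI (G i - {cs ! i} - U i)"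
    then obtain d d' l where "l < i" "d \<in> G l" "d \<in> G i" "d' \<in> G i" "d' \<noteq> cs ! i"
      "\<forall>l<i. d' \<notin> G l" "v \<in> cvars d" "v \<in> cvars d'"
      by (auto simp: varsI_iff U_def)
    thus "v \<in> W" using T3[OF that] G_W[OF that] by blast
  qed
  have U_I: "U i \<subseteq> I" for i unfolding U_def using G_I by auto
  have main: "w (U i - C i) \<noteq> 0 \<Longrightarrow>
     (\<Prod>l<i. w (G l) / w (G l - {cs ! l})) = w (U i) / w (U i - C i)" if "i \<le> j" for i
    using that
  proof (induction i)
    case 0
    then show ?case unfolding U_def C_def w_def by (simp add: wJ_empty)
  next
    case (Suc i)
    have ij: "i < j" using Suc.prems by simp
    have il: "i < length cs" using ij j by simp
    define P where "P = U i \<inter> G i"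
    define Q where "Q = U i - G i"
    define R where "R = G i - {cs ! i} - U i"
    have ciU: "cs ! i \<notin> U i" unfolding U_def using notinG[OF il] by auto
    have CU: "C i \<subseteq> U i"
    proof
      fix c assume "c \<in> C i"
      then obtain p where p: "p < length (take i cs)" "c = take i cs ! p"
        unfolding C_def by (auto simp: in_set_conv_nth)
      hence "p < i" "c = cs ! p" "p < length cs" by auto
      thus "c \<in> U i" using c_in_G unfolding U_def by auto
    qed
    have CS: "C (Suc i) = insert (cs ! i) (C i)" unfolding C_def
      using il by (simp add: take_Suc_conv_app_nth)
    have US: "U (Suc i) = U i \<union> G i" unfolding U_def by (auto simp: lessThan_Suc)
    have fins: "finite P" "finite Q" "finite R" "finite (G i)" "finite (U i)" "finite (U i - C i)"
      unfolding P_def Q_def R_def using finG G_I U_I by (auto intro: finite_subset)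
    have w1: "w (U (Suc i)) = w Q * w (G i)"
    proof -
      have "U (Suc i) = Q \<union> G i" "Q \<inter> G i = {}" unfolding Q_def US by auto
      moreover have "varsI Q \<inter> varsI (G i) \<subseteq> W" using sepQ[OF ij] unfolding Q_def .
      ultimately show ?thesis unfolding w_def using wJ_mult[OF fins(2,4)] by auto
    qed
    have w2: "w (U i) = w Q * w P"
    proof -
      have "U i = Q \<union> P" "Q \<inter> P = {}" unfolding Q_def P_def by auto
      moreover have "varsI Q \<inter> varsI P \<subseteq> W"
        using sepQ[OF ij] varsI_mono[of P "G i"] unfolding Q_def P_def by auto
      ultimately show ?thesis unfolding w_def using wJ_mult[OF fins(2,1)] by auto
    qed
    have w4: "w (G i - {cs ! i}) = w P * w R"
    proof -
      have "G i - {cs ! i} = P \<union> R" "P \<inter> R = {}" unfolding P_def R_def using ciU by auto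
      moreover have "varsI P \<inter> varsI R \<subseteq> W" using sepPR[OF ij] unfolding P_def R_def .
      ultimately show ?thesis unfolding w_def using wJ_mult[OF fins(1,3)] by auto
    qed
    have w5: "w (U (Suc i) - C (Suc i)) = w (U i - C i) * w R"
    proof -
      have "U (Suc i) - C (Suc i) = (U i - C i) \<union> R" "(U i - C i) \<inter> R = {}"
        unfolding US CS R_def using ciU CU by auto
      moreover have "varsI (U i - C i) \<inter> varsI R \<subseteq> W"
      proof -
        have "varsI (U i) = varsI Q \<union> varsI P" unfolding Q_def P_def varsI_Un[symmetric]
          by (simp add: Un_Diff_Int)
        moreover have "varsI Q \<inter> varsI R \<subseteq> W"
          using sepQ[OF ij] varsI_mono[of R "G i"] unfolding Q_def R_def by auto
        moreover have "varsI P \<inter> varsI R \<subseteq> W" using sepPR[OF ij] unfolding P_def R_def .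
        moreover have "varsI (U i - C i) \<subseteq> varsI (U i)" by (rule varsI_mono) auto
        ultimately show ?thesis by blast
      qed
      ultimately show ?thesis unfolding w_def using wJ_mult[OF fins(6,3)] by auto
    qed
    have nzUC: "w (U i - C i) \<noteq> 0" "w R \<noteq> 0" using Suc.prems w5 by auto
    have nzG: "w P \<noteq> 0" "w R \<noteq> 0" using nz1 ij w4 unfolding w_def G_def W_def X_def by auto
    have IH: "(\<Prod>l<i. w (G l) / w (G l - {cs ! l})) = w (U i) / w (U i - C i)"
      using Suc.IH ij nzUC by simp
    show ?case
      unfolding prod.lessThan_Suc IH w1 w2 w4 w5 using nzUC nzG by (simp add: field_simps)
  qed
  have T0: "IK I xs (Suc k) (cs ! (j - 1)) = U j"
  proof
    show "IK I xs (Suc k) (cs ! (j - 1)) \<subseteq> U j"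
    proof
      fix d assume "d \<in> IK I xs (Suc k) (cs ! (j - 1))"
      hence dI: "d \<in> I" and h: "d = cs ! (j - 1) \<or> cprecK I xs (Suc k) d (cs ! (j - 1))"
        unfolding IK_def by auto
      have "d \<in> G (j - 1)" if "d = cs ! (j - 1) \<or> cprecK I xs k d (cs ! (j - 1))"
        using that dI unfolding G_def IK_def by auto
      moreover
      have "\<exists>p<j. d \<in> G p" if e: "e \<in> I" "d = e \<or> cprecK I xs k d e" "cprec xs e (cs ! (j - 1))"
        "x \<in> cvars e" for e
      proof -
        obtain p where p: "p < length cs" "e = cs ! p" using F_Ix e by blast
        have "p < j - 1" using idx[OF p(1) jl] e(3) p(2) by simp
        moreover have "d \<in> G p" using e(2) dI p(2) unfolding G_def IK_def by auto
        ultimately show ?thesis using j by (intro exI[of _ p]) auto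
      qed
      ultimately show "d \<in> U j" using h j unfolding U_def x_def
        by (auto intro: exI[of _ "j - 1"])
    qed
    show "U j \<subseteq> IK I xs (Suc k) (cs ! (j - 1))"
    proof
      fix d assume "d \<in> U j"
      then obtain l where l: "l < j" "d \<in> G l" unfolding U_def by auto
      have ll: "l < length cs" using l j by simp
      have dI: "d \<in> I" and dl: "d = cs ! l \<or> cprecK I xs k d (cs ! l)" using G_mem[OF l(2)] by auto
      show "d \<in> IK I xs (Suc k) (cs ! (j - 1))"
      proof (cases "l = j - 1")
        case True then show ?thesis using dI dl unfolding IK_def by auto
      next
        case False
        hence "cprec xs (cs ! l) (cs ! (j - 1))" using chain[OF _ jl, of l] l by simp
        hence "cprecK I xs (Suc k) d (cs ! (j - 1))"
          using dl F_cs[OF ll] F_cs[OF jl] unfolding x_def by auto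
        then show ?thesis using dI unfolding IK_def by auto
      qed
    qed
  qed
  have "w (U j - C j) \<noteq> 0" using nz2 T0 unfolding w_def C_def W_def X_def by simp
  from main[OF order_refl this] show ?thesis
    unfolding w_def G_def W_def X_def T0[symmetric] C_def by simp
qed

end
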